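(* Let $\Omega$ be an infinite set, $A$ a partition of $\Omega$, $S=\mathrm{Sym}(\Omega)$, $G=S_{(A)}$, and $\kappa$ an infinite regular cardinal with $\kappa\le|\Omega|$. Then: (a) if some member of $A$ has cardinality $\ge\kappa$, there is no $\kappa$-uncrowded generalized metric on $\Omega$ with respect to which all members of $G$ are bounded; (b) if all members of $A$ have cardinality $<\kappa$ but there is no common bound $\lambda<\kappa$ for these cardinalities, then there is a $\kappa$-uncrowded generalized metric on $\Omega$ with respect to which all elements of $G$ are bounded, but no uniformly $\kappa$-uncrowded generalized metric with this property; (c) if all members of $A$ have cardinality $\le\lambda$ for some $\lambda<\kappa$, then there is a uniformly $\kappa$-uncrowded generalized metric with respect to which all elements of $G$ are bounded. Consequently, for partitions $A,B$ of $\Omega$ falling under distinct cases among (a), (b), (c), $S_{(A)}\not\approx_\kappa S_{(B)}$; more precisely, if $A$ falls under a later case than $B$, then $S_{(B)}\not\preccurlyeq_\kappa S_{(A)}$.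
   Context: $\mathrm{Sym}(\Omega)$ is the group of all permutations of $\Omega$, acting on the right. For a partition $A$ of $\Omega$ (a set of disjoint nonempty subsets with union $\Omega$), $S_{(A)}=\{f\in S:\Sigma f=\Sigma\ \forall\Sigma\in A\}$. Let $P=\{r\in\mathbb R:r\ge0\}\cup\{\infty\}$. A generalized metric on $\Omega$ is $d:\Omega\times\Omega\to P$ satisfying the usual metric axioms. $B_d(\alpha,r)=\{\beta:d(\alpha,\beta)<r\}$. $d$ is $\kappa$-uncrowded if $|B_d(\alpha,r)|<\kappa$ for all $\alpha$ and all $r<\infty$; uniformly $\kappa$-uncrowded if for every $r<\infty$ there is $\lambda<\kappa$ with $|B_d(\alpha,r)|\le\lambda$ for all $\alpha$. For $g\in S$, $\|g\|_d=\sup_\alpha d(\alpha,\alpha g)$; $g$ is bounded if $\|g\|_d<\infty$. For subgroups $G_1,G_2\le S$, $G_1\preccurlyeq_\kappa G_2$ means there is $U\subseteq S$, $|U|<\kappa$, with $G_1\le\langle G_2\cup U\rangle$; $G_1\approx_\kappa G_2$ means both directions hold. *)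

theory Defs
  imports Complex_Main "HOL-Library.Extended_Nonnegative_Real" "HOL-Library.Disjoint_Sets"
begin

unbundle cardinal_syntax

text \<open>Omega is the universe of the type 'a.
  Cardinals are represented as cardinal-order relations (BNF cardinals of Main);
  |X| is the cardinal of the set X, <o and \<le>o compare cardinals.\<close>

definition Sym :: "('a \<Rightarrow> 'a) set" where
  "Sym = {f. bij f}"

definition stab :: "'a set set \<Rightarrow> ('a \<Rightarrow> 'a) set" where
  "stab A = {f \<in> Sym. \<forall>X\<in>A. f ` X = X}"

inductive_set gen_perm :: "('a \<Rightarrow> 'a) set \<Rightarrow> ('a \<Rightarrow> 'a) set" for X where
  gen_id: "id \<in> gen_perm X"
| gen_base: "f \<in> X \<Longrightarrow> f \<in> gen_perm X"
| gen_comp: "f \<in> gen_perm X \<Longrightarrow> g \<in> gen_perm X \<Longrightarrow> f \<circ> g \<in> gen_perm X"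
| gen_inv: "f \<in> gen_perm X \<Longrightarrow> inv f \<in> gen_perm X"

definition gen_metric :: "('a \<Rightarrow> 'a \<Rightarrow> ennreal) \<Rightarrow> bool" where
  "gen_metric d \<longleftrightarrow> (\<forall>x y. d x y = 0 \<longleftrightarrow> x = y) \<and> (\<forall>x y. d x y = d y x)
     \<and> (\<forall>x y z. d x z \<le> d x y + d y z)"

definition ball_d :: "('a \<Rightarrow> 'a \<Rightarrow> ennreal) \<Rightarrow> 'a \<Rightarrow> ennreal \<Rightarrow> 'a set" where
  "ball_d d x r = {y. d x y < r}"

definition uncrowded :: "'b rel \<Rightarrow> ('a \<Rightarrow> 'a \<Rightarrow> ennreal) \<Rightarrow> bool" where
  "uncrowded k d \<longleftrightarrow> (\<forall>x r. r < \<infinity> \<longrightarrow> |ball_d d x r| <o k)"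

text \<open>cardinals \<lambda> < \<kappa> \<le> |Omega| are represented as |L| for L a set of type 'a\<close>
definition unif_uncrowded :: "'b rel \<Rightarrow> ('a \<Rightarrow> 'a \<Rightarrow> ennreal) \<Rightarrow> bool" where
  "unif_uncrowded k d \<longleftrightarrow>
     (\<forall>r. r < \<infinity> \<longrightarrow> (\<exists>L::'a set. |L| <o k \<and> (\<forall>x. |ball_d d x r| \<le>o card_of L)))"

definition norm_d :: "('a \<Rightarrow> 'a \<Rightarrow> ennreal) \<Rightarrow> ('a \<Rightarrow> 'a) \<Rightarrow> ennreal" where
  "norm_d d g = (SUP x. d x (g x))"

definition bounded_perm :: "('a \<Rightarrow> 'a \<Rightarrow> ennreal) \<Rightarrow> ('a \<Rightarrow> 'a) \<Rightarrow> bool" where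
  "bounded_perm d g \<longleftrightarrow> norm_d d g < \<infinity>"

definition preceq_k :: "'b rel \<Rightarrow> ('a \<Rightarrow> 'a) set \<Rightarrow> ('a \<Rightarrow> 'a) set \<Rightarrow> bool" where
  "preceq_k k G1 G2 \<longleftrightarrow> (\<exists>U. U \<subseteq> Sym \<and> |U| <o k \<and> G1 \<subseteq> gen_perm (G2 \<union> U))"

definition approx_k :: "'b rel \<Rightarrow> ('a \<Rightarrow> 'a) set \<Rightarrow> ('a \<Rightarrow> 'a) set \<Rightarrow> bool" where
  "approx_k k G1 G2 \<longleftrightarrow> preceq_k k G1 G2 \<and> preceq_k k G2 G1"

definition case_a :: "'b rel \<Rightarrow> 'a set set \<Rightarrow> bool" where
  "case_a k A \<longleftrightarrow> (\<exists>X\<in>A. k \<le>o card_of X)"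

definition case_b :: "'b rel \<Rightarrow> 'a set set \<Rightarrow> bool" where
  "case_b k A \<longleftrightarrow> (\<forall>X\<in>A. |X| <o k) \<and>
     \<not> (\<exists>L::'a set. |L| <o k \<and> (\<forall>X\<in>A. |X| \<le>o card_of L))"

definition case_c :: "'b rel \<Rightarrow> 'a set set \<Rightarrow> bool" where
  "case_c k A \<longleftrightarrow> (\<exists>L::'a set. |L| <o k \<and> (\<forall>X\<in>A. |X| \<le>o card_of L))"

definition case_no :: "'b rel \<Rightarrow> 'a set set \<Rightarrow> nat" where
  "case_no k A = (if case_a k A then 1 else if case_b k A then 2 else 3)"

end

theory Submission
  imports Defs
begin

lemma fin_less:
  assumes "Card_order k" "infinite (Field k)" "finite A" shows "|A| <o k"
proof -
  have wo: "Well_order k" using assms(1) card_order_on_well_order_on by blast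
  show ?thesis by (rule finite_ordLess_infinite[OF card_of_Well_order wo]) (simp_all add: Field_card_of assms)
qed

lemma part_block:
  assumes "partition_on UNIV A"
  shows "\<exists>X\<in>A. y \<in> X \<and> (\<forall>Z\<in>A. y \<in> Z \<longrightarrow> Z = X)"
proof -
  from partition_onD1[OF assms] obtain X where "X \<in> A" "y \<in> X" by blast
  moreover have "\<forall>Z\<in>A. y \<in> Z \<longrightarrow> Z = X"
  proof (intro ballI impI, rule ccontr)
    fix Z assume "Z \<in> A" "y \<in> Z" "Z \<noteq> X"
    then have "Z \<inter> X = {}" using disjointD[OF partition_onD2[OF assms]] \<open>X \<in> A\<close> by blast
    then show False using \<open>y \<in> Z\<close> \<open>y \<in> X\<close> by blast
  qed
  ultimately show ?thesis by blast
qed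

definition Erel :: "'a set set \<Rightarrow> ('a \<Rightarrow> 'a) set \<Rightarrow> ('a \<times> 'a) set" where
  "Erel A U = {(x,y). (\<exists>X\<in>A. x \<in> X \<and> y \<in> X) \<or> (\<exists>u\<in>U. y = u x \<or> x = u y)}"

definition dm :: "'a set set \<Rightarrow> ('a \<Rightarrow> 'a) set \<Rightarrow> 'a \<Rightarrow> 'a \<Rightarrow> ennreal" where
  "dm A U x y = (if \<exists>n. (x,y) \<in> Erel A U ^^ n then of_nat (LEAST n. (x,y) \<in> Erel A U ^^ n) else \<infinity>)"

lemma Erel_refl: "partition_on UNIV A \<Longrightarrow> (x,x) \<in> Erel A U"
  using partition_onD1[of UNIV A] unfolding Erel_def by blast

lemma Erel_sym: "(x,y) \<in> Erel A U \<Longrightarrow> (y,x) \<in> Erel A U"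
  unfolding Erel_def by blast

lemma relpow_sym: "(x,y) \<in> Erel A U ^^ n \<Longrightarrow> (y,x) \<in> Erel A U ^^ n"
proof (induction n arbitrary: x y)
  case 0 then show ?case by simp
next
  case (Suc n)
  from Suc.prems obtain z where z1: "(x,z) \<in> Erel A U ^^ n" and z2: "(z,y) \<in> Erel A U" by (rule relpow_Suc_E)
  show ?case by (rule relpow_Suc_I2[OF Erel_sym[OF z2] Suc.IH[OF z1]])
qed

lemma relpow_mono_E:
  assumes "partition_on UNIV A" "(x,y) \<in> Erel A U ^^ m" "m \<le> n"
  shows "(x,y) \<in> Erel A U ^^ n"
proof -
  have "(x,y) \<in> Erel A U ^^ (m + j)" for j
  proof (induction j)
    case 0 then show ?case using assms by simp
  next
    case (Suc j)
    have "(x,y) \<in> Erel A U ^^ Suc (m + j)" by (rule relpow_Suc_I[OF Suc.IH Erel_refl[OF assms(1)]])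
    then show ?case by simp
  qed
  from this[of "n - m"] assms(3) show ?thesis by simp
qed

lemma dm_le: "(x,y) \<in> Erel A U ^^ n \<Longrightarrow> dm A U x y \<le> of_nat n"
  unfolding dm_def by (auto intro: Least_le)

lemma dm_less:
  assumes "partition_on UNIV A" "dm A U x y < r" "r \<le> of_nat N"
  shows "(x,y) \<in> Erel A U ^^ N"
proof -
  have ex: "\<exists>n. (x,y) \<in> Erel A U ^^ n" using assms(2) unfolding dm_def by (auto split: if_splits)
  let ?m = "LEAST n. (x,y) \<in> Erel A U ^^ n"
  have m: "(x,y) \<in> Erel A U ^^ ?m" using ex by (rule LeastI_ex)
  have "of_nat ?m < r" using assms(2) ex unfolding dm_def by simp
  then have "of_nat ?m < (of_nat N :: ennreal)" using assms(3) by (rule less_le_trans)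
  then have "?m \<le> N" by simp
  then show ?thesis using relpow_mono_E[OF assms(1) m] by blast
qed

lemma dm_metric:
  assumes "partition_on UNIV A"
  shows "gen_metric (dm A U)"
  unfolding gen_metric_def
proof (intro conjI allI)
  fix x y
  show "(dm A U x y = 0) = (x = y)"
  proof
    assume h: "dm A U x y = 0"
    then have ex: "\<exists>n. (x,y) \<in> Erel A U ^^ n" unfolding dm_def by (auto split: if_splits)
    then have "(LEAST n. (x,y) \<in> Erel A U ^^ n) = 0" using h unfolding dm_def by auto
    with LeastI_ex[OF ex] show "x = y" by simp
  next
    assume "x = y"
    then have "(x,y) \<in> Erel A U ^^ 0" by simp
    from dm_le[OF this] show "dm A U x y = 0" by simp
  qed
  have "\<And>n. (x,y) \<in> Erel A U ^^ n \<longleftrightarrow> (y,x) \<in> Erel A U ^^ n" by (auto intro: relpow_sym)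
  then show "dm A U x y = dm A U y x" unfolding dm_def by simp
next
  fix x y z
  show "dm A U x z \<le> dm A U x y + dm A U y z"
  proof (cases "dm A U x y = \<infinity> \<or> dm A U y z = \<infinity>")
    case True then show ?thesis by auto
  next
    case False
    then have e1: "\<exists>n. (x,y) \<in> Erel A U ^^ n" and e2: "\<exists>n. (y,z) \<in> Erel A U ^^ n"
      unfolding dm_def by (auto split: if_splits)
    let ?m = "LEAST n. (x,y) \<in> Erel A U ^^ n" and ?n = "LEAST n. (y,z) \<in> Erel A U ^^ n"
    have "(x,z) \<in> Erel A U ^^ (?m + ?n)" unfolding relpow_add
      using LeastI_ex[OF e1] LeastI_ex[OF e2] by blast
    then have "dm A U x z \<le> of_nat (?m + ?n)" by (rule dm_le)
    also have "\<dots> = dm A U x y + dm A U y z" using e1 e2 unfolding dm_def by simp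
    finally show ?thesis .
  qed
qed

lemma bounded_of_relpow:
  assumes "\<forall>x. (x, g x) \<in> Erel A U ^^ N"
  shows "bounded_perm (dm A U) g"
proof -
  have "norm_d (dm A U) g \<le> of_nat N" unfolding norm_d_def
    by (rule SUP_least) (simp add: dm_le assms)
  moreover have "(of_nat N :: ennreal) < \<infinity>" unfolding infinity_ennreal_def by (rule of_nat_less_top)
  ultimately show ?thesis unfolding bounded_perm_def by (rule le_less_trans)
qed

lemma gen_perm_relpow:
  assumes "partition_on UNIV A" "X \<subseteq> Sym" "\<forall>f\<in>X. \<exists>N. \<forall>x. (x, f x) \<in> Erel A U ^^ N"
    and "g \<in> gen_perm X"
  shows "bij g \<and> (\<exists>N. \<forall>x. (x, g x) \<in> Erel A U ^^ N)"
  using assms(4)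
proof (induction g rule: gen_perm.induct)
  case gen_id
  then show ?case by (metis bij_id id_apply relpow_0_I)
next
  case (gen_base f)
  then show ?case using assms(2,3) unfolding Sym_def by auto
next
  case (gen_comp f g)
  then obtain N1 N2 where n1: "\<forall>x. (x, f x) \<in> Erel A U ^^ N1" and n2: "\<forall>x. (x, g x) \<in> Erel A U ^^ N2"
    by blast
  have "\<forall>x. (x, (f \<circ> g) x) \<in> Erel A U ^^ (N2 + N1)" unfolding relpow_add using n1 n2 by auto
  then show ?case using gen_comp bij_comp by blast
next
  case (gen_inv f)
  then obtain N where n: "\<forall>x. (x, f x) \<in> Erel A U ^^ N" and b: "bij f" by blast
  have "\<forall>x. (x, inv f x) \<in> Erel A U ^^ N"
  proof
    fix x
    have "(inv f x, f (inv f x)) \<in> Erel A U ^^ N" using n by blast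
    then have "(f (inv f x), inv f x) \<in> Erel A U ^^ N" by (rule relpow_sym)
    moreover have "f (inv f x) = x" using b by (simp add: bij_is_surj surj_f_inv_f)
    ultimately show "(x, inv f x) \<in> Erel A U ^^ N" by simp
  qed
  then show ?case using b bij_imp_bij_inv by blast
qed

lemma stab_relpow:
  assumes "g \<in> stab A" "partition_on UNIV A"
  shows "\<forall>x. (x, g x) \<in> Erel A U ^^ 1"
proof
  fix x
  obtain X where "X \<in> A" "x \<in> X" using partition_onD1[OF assms(2)] by blast
  then have "g x \<in> X" using assms(1) unfolding stab_def by blast
  then show "(x, g x) \<in> Erel A U ^^ 1" using \<open>X \<in> A\<close> \<open>x \<in> X\<close> unfolding Erel_def by auto
qed

lemma U_relpow: "u \<in> U \<Longrightarrow> \<forall>x. (x, u x) \<in> Erel A U ^^ 1"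
  unfolding Erel_def by auto

lemma dm_bounded_all:
  assumes "partition_on UNIV A" "U \<subseteq> Sym" "g \<in> gen_perm (stab A \<union> U)"
  shows "bounded_perm (dm A U) g"
proof -
  have "stab A \<union> U \<subseteq> Sym" using assms(2) unfolding stab_def by auto
  moreover have "\<forall>f\<in>stab A \<union> U. \<exists>N. \<forall>x. (x, f x) \<in> Erel A U ^^ N"
    using stab_relpow[OF _ assms(1)] U_relpow by blast
  ultimately show ?thesis using gen_perm_relpow[OF assms(1) _ _ assms(3)] bounded_of_relpow by blast
qed

lemma dm_bounded_stab:
  assumes "partition_on UNIV A" "g \<in> stab A"
  shows "bounded_perm (dm A {}) g"
  using dm_bounded_all[OF assms(1), of "{}" g] assms(2) gen_perm.gen_base by auto

lemma Erel_Image: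
  assumes "partition_on UNIV A" "U \<subseteq> Sym"
  shows "\<exists>X\<in>A. y \<in> X \<and> Erel A U `` {y} \<subseteq> X \<union> ((\<lambda>u. u y) ` U \<union> (\<lambda>u. inv u y) ` U)"
proof -
  obtain X where X: "X \<in> A" "y \<in> X" "\<forall>Z\<in>A. y \<in> Z \<longrightarrow> Z = X" using part_block[OF assms(1)] by blast
  have "Erel A U `` {y} \<subseteq> X \<union> ((\<lambda>u. u y) ` U \<union> (\<lambda>u. inv u y) ` U)"
  proof
    fix z assume "z \<in> Erel A U `` {y}"
    then have "(\<exists>Z\<in>A. y \<in> Z \<and> z \<in> Z) \<or> (\<exists>u\<in>U. z = u y \<or> y = u z)" unfolding Erel_def by auto
    then show "z \<in> X \<union> ((\<lambda>u. u y) ` U \<union> (\<lambda>u. inv u y) ` U)"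
    proof
      assume "\<exists>Z\<in>A. y \<in> Z \<and> z \<in> Z" then show ?thesis using X by blast
    next
      assume "\<exists>u\<in>U. z = u y \<or> y = u z"
      then obtain u where u: "u \<in> U" "z = u y \<or> y = u z" by blast
      have "bij u" using u(1) assms(2) unfolding Sym_def by auto
      then have "y = u z \<Longrightarrow> z = inv u y" by (simp add: bij_is_inj)
      then show ?thesis using u by blast
    qed
  qed
  then show ?thesis using X by blast
qed

lemma Erel_pow_Suc_Image:
  "(Erel A U ^^ Suc n) `` {x} = (\<Union>y \<in> (Erel A U ^^ n) `` {x}. Erel A U `` {y})"
  by auto

lemma Erel_Image_less:
  assumes part: "partition_on UNIV A" and US: "U \<subseteq> Sym" and card: "Card_order k"
    and kinf: "infinite (Field k)" and blk: "\<forall>X\<in>A. |X| <o k" and Uk: "|U| <o k"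
  shows "|Erel A U `` {y}| <o k"
proof -
  obtain X where X: "X \<in> A" "Erel A U `` {y} \<subseteq> X \<union> ((\<lambda>u. u y) ` U \<union> (\<lambda>u. inv u y) ` U)"
    using Erel_Image[OF part US] by blast
  have i1: "|(\<lambda>u. u y) ` U| <o k" using card_of_image Uk by (rule ordLeq_ordLess_trans)
  have i2: "|(\<lambda>u. inv u y) ` U| <o k" using card_of_image Uk by (rule ordLeq_ordLess_trans)
  have "|X \<union> ((\<lambda>u. u y) ` U \<union> (\<lambda>u. inv u y) ` U)| <o k"
    using card_of_Un_ordLess_infinite_Field[OF kinf card blk[rule_format, OF X(1)]
        card_of_Un_ordLess_infinite_Field[OF kinf card i1 i2]] .
  with card_of_mono1[OF X(2)] show ?thesis by (rule ordLeq_ordLess_trans)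
qed

lemma Erel_pow_less:
  assumes part: "partition_on UNIV A" and US: "U \<subseteq> Sym" and card: "Card_order k"
    and kinf: "infinite (Field k)" and reg: "regularCard k" and blk: "\<forall>X\<in>A. |X| <o k" and Uk: "|U| <o k"
  shows "|(Erel A U ^^ n) `` {x}| <o k"
proof (induction n)
  case 0
  then show ?case using fin_less[OF card kinf, of "{x}"] by simp
next
  case (Suc n)
  have ci: "Cinfinite k" using card kinf unfolding cinfinite_def by blast
  show ?case unfolding Erel_pow_Suc_Image
    by (rule card_of_UNION_ordLess_infinite_Field_regularCard[OF reg ci Suc])
       (use Erel_Image_less[OF part US card kinf blk Uk] in blast)
qed

lemma Erel_Image_leq:
  assumes part: "partition_on UNIV A" and US: "U \<subseteq> Sym"
    and blk: "\<forall>X\<in>A. |X| \<le>o |L|"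
  shows "|Erel A U `` {y}| \<le>o |L <+> (U <+> U)|"
proof -
  obtain X where X: "X \<in> A" "Erel A U `` {y} \<subseteq> X \<union> ((\<lambda>u. u y) ` U \<union> (\<lambda>u. inv u y) ` U)"
    using Erel_Image[OF part US] by blast
  let ?I = "(\<lambda>u. u y) ` U \<union> (\<lambda>u. inv u y) ` U"
  have a1: "|Erel A U `` {y}| \<le>o |X \<union> ?I|" using X(2) by (rule card_of_mono1)
  have a2: "|X \<union> ?I| \<le>o |X <+> ?I|" by (rule card_of_Un_Plus_ordLeq)
  have b1: "|?I| \<le>o |(\<lambda>u. u y) ` U <+> (\<lambda>u. inv u y) ` U|" by (rule card_of_Un_Plus_ordLeq)
  have b2: "|(\<lambda>u. u y) ` U <+> (\<lambda>u. inv u y) ` U| \<le>o |U <+> U|"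
    by (rule card_of_Plus_mono[OF card_of_image card_of_image])
  have a3: "|X <+> ?I| \<le>o |L <+> (U <+> U)|"
    using card_of_Plus_mono[OF _ ordLeq_transitive[OF b1 b2]] blk X(1) by blast
  show ?thesis using ordLeq_transitive[OF a1 ordLeq_transitive[OF a2 a3]] .
qed

lemma Times_less:
  assumes card: "Card_order k" and kinf: "infinite (Field k)" and reg: "regularCard k"
    and M: "|M| <o k" and K: "|K| <o k"
  shows "|M \<times> K| <o k"
proof -
  have ci: "Cinfinite k" using card kinf unfolding cinfinite_def by blast
  have eq: "M \<times> K = (\<Union>m\<in>M. (\<lambda>z. (m,z)) ` K)" by auto
  have "\<forall>m\<in>M. |(\<lambda>z. (m,z)) ` K| <o k" using card_of_image K ordLeq_ordLess_trans by blast
  then show ?thesis unfolding eq by (rule card_of_UNION_ordLess_infinite_Field_regularCard[OF reg ci M])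
qed

lemma Erel_pow_unif:
  fixes L :: "'a set" and A :: "'a set set"
  assumes part: "partition_on UNIV A" and US: "U \<subseteq> Sym" and card: "Card_order k"
    and kinf: "infinite (Field k)" and reg: "regularCard k" and blk: "\<forall>X\<in>A. |X| \<le>o |L|"
    and L: "|L| <o k" and Uk: "|U| <o k" and kle: "k \<le>o |(UNIV :: 'a set)|"
  shows "\<exists>M::'a set. |M| <o k \<and> (\<forall>x. |(Erel A U ^^ n) `` {x}| \<le>o card_of M)"
proof (induction n)
  case 0
  have "|{undefined::'a}| <o k" using fin_less[OF card kinf, of "{undefined::'a}"] by simp
  moreover have "\<forall>x. |(Erel A U ^^ 0) `` {x}| \<le>o |{undefined::'a}|" by (simp add: card_of_singl_ordLeq)
  ultimately show ?case by blast
next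
  case (Suc n)
  then obtain M :: "'a set" where M: "|M| <o k" "\<forall>x. |(Erel A U ^^ n) `` {x}| \<le>o |M|" by blast
  let ?K = "L <+> (U <+> U)"
  have K: "|?K| <o k"
    using card_of_Plus_ordLess_infinite_Field[OF kinf card L card_of_Plus_ordLess_infinite_Field[OF kinf card Uk Uk]] .
  have MK: "|M \<times> ?K| <o k" by (rule Times_less[OF card kinf reg M(1) K])
  then have "|M \<times> ?K| \<le>o |(UNIV :: 'a set)|" using ordLess_imp_ordLeq kle ordLeq_transitive by blast
  then obtain f where f: "inj_on f (M \<times> ?K)" "f ` (M \<times> ?K) \<subseteq> (UNIV :: 'a set)"
    using card_of_ordLeq[of "M \<times> ?K" "UNIV :: 'a set"] by blast
  let ?M = "f ` (M \<times> ?K)"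
  have M1: "|?M| <o k" using card_of_image MK by (rule ordLeq_ordLess_trans)
  have M2: "|M \<times> ?K| \<le>o |?M|" using card_of_ordLeq[of "M \<times> ?K" ?M] f(1) by blast
  have "\<forall>x. |(Erel A U ^^ Suc n) `` {x}| \<le>o |?M|"
  proof
    fix x
    let ?S = "(Erel A U ^^ n) `` {x}"
    have c1: "|(Erel A U ^^ Suc n) `` {x}| \<le>o |SIGMA y : ?S. Erel A U `` {y}|"
      unfolding Erel_pow_Suc_Image by (rule card_of_UNION_Sigma)
    have c2: "|SIGMA y : ?S. Erel A U `` {y}| \<le>o |SIGMA y : ?S. ?K|"
      by (rule card_of_Sigma_mono1) (use Erel_Image_leq[OF part US blk] in blast)
    have c3: "|SIGMA y : ?S. ?K| \<le>o |M \<times> ?K|" by (rule card_of_Times_mono1) (use M(2) in blast)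
    show "|(Erel A U ^^ Suc n) `` {x}| \<le>o |?M|"
      using ordLeq_transitive[OF c1 ordLeq_transitive[OF c2 ordLeq_transitive[OF c3 M2]]] .
  qed
  then show ?case using M1 by blast
qed

lemma ball_sub:
  assumes part: "partition_on UNIV A" and r: "r < \<infinity>"
  shows "\<exists>N. \<forall>x. ball_d (dm A U) x r \<subseteq> (Erel A U ^^ N) `` {x}"
proof -
  obtain N where "r < of_nat N" using ennreal_Ex_less_of_nat r unfolding infinity_ennreal_def by blast
  then have "r \<le> of_nat N" by simp
  then show ?thesis unfolding ball_d_def using dm_less[OF part] by blast
qed

lemma dm_uncrowded:
  assumes part: "partition_on UNIV A" and US: "U \<subseteq> Sym" and card: "Card_order k"
    and kinf: "infinite (Field k)" and reg: "regularCard k" and blk: "\<forall>X\<in>A. |X| <o k" and Uk: "|U| <o k"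
  shows "uncrowded k (dm A U)"
  unfolding uncrowded_def
proof (intro allI impI)
  fix x and r :: ennreal assume "r < \<infinity>"
  then obtain N where N: "ball_d (dm A U) x r \<subseteq> (Erel A U ^^ N) `` {x}" using ball_sub[OF part] by blast
  show "|ball_d (dm A U) x r| <o k"
    using card_of_mono1[OF N] Erel_pow_less[OF part US card kinf reg blk Uk] by (rule ordLeq_ordLess_trans)
qed

lemma dm_unif:
  fixes L :: "'a set" and A :: "'a set set"
  assumes part: "partition_on UNIV A" and US: "U \<subseteq> Sym" and card: "Card_order k"
    and kinf: "infinite (Field k)" and reg: "regularCard k" and blk: "\<forall>X\<in>A. |X| \<le>o |L|"
    and L: "|L| <o k" and Uk: "|U| <o k" and kle: "k \<le>o |(UNIV :: 'a set)|"
  shows "unif_uncrowded k (dm A U)"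
proof -
  have "\<exists>Z::'a set. |Z| <o k \<and> (\<forall>x. |ball_d (dm A U) x r| \<le>o card_of Z)" if "r < \<infinity>" for r
  proof -
  from that obtain N where N: "\<forall>x. ball_d (dm A U) x r \<subseteq> (Erel A U ^^ N) `` {x}" using ball_sub[OF part] by blast
  obtain M :: "'a set" where M: "|M| <o k" "\<forall>x. |(Erel A U ^^ N) `` {x}| \<le>o card_of M"
    using Erel_pow_unif[OF part US card kinf reg blk L Uk kle] by blast
  have "\<forall>x. |ball_d (dm A U) x r| \<le>o card_of M"
  proof
    fix x
    have n: "ball_d (dm A U) x r \<subseteq> (Erel A U ^^ N) `` {x}" using N by blast
    have m: "|(Erel A U ^^ N) `` {x}| \<le>o card_of M" using M(2) by blast
    show "|ball_d (dm A U) x r| \<le>o card_of M" using ordLeq_transitive[OF card_of_mono1[OF n] m] .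
  qed
  then show "\<exists>Z::'a set. |Z| <o k \<and> (\<forall>x. |ball_d (dm A U) x r| \<le>o card_of Z)" using M(1) by blast
  qed
  then show ?thesis unfolding unif_uncrowded_def by blast
qed

definition Cond :: "('a \<Rightarrow> 'a \<Rightarrow> ennreal) \<Rightarrow> 'a set set \<Rightarrow> bool" where
  "Cond d A \<longleftrightarrow> (\<forall>F. finite F \<longrightarrow> (\<forall>n::nat. \<exists>x y. x \<notin> F \<and> y \<notin> F \<and> x \<noteq> y \<and>
      (\<exists>X\<in>A. x \<in> X \<and> y \<in> X) \<and> of_nat n \<le> d x y))"

primrec ptsF :: "('a set \<Rightarrow> nat \<Rightarrow> 'a \<times> 'a \<Rightarrow> bool) \<Rightarrow> nat \<Rightarrow> 'a set" where
  "ptsF Q 0 = {}"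
| "ptsF Q (Suc n) = ptsF Q n \<union> {fst (SOME p. Q (ptsF Q n) n p), snd (SOME p. Q (ptsF Q n) n p)}"

lemma ptsF_finite: "finite (ptsF Q n)"
  by (induction n) auto

lemma ptsF_mono: "m \<le> n \<Longrightarrow> ptsF Q m \<subseteq> ptsF Q n"
proof (induction n)
  case 0 then show ?case by simp
next
  case (Suc n) then show ?case by (auto simp: le_Suc_eq)
qed

lemma unbounded_of_cond:
  assumes part: "partition_on UNIV A" and C: "Cond d A"
  shows "\<exists>g\<in>stab A. \<not> bounded_perm d g"
proof -
  define Q where "Q F n p \<longleftrightarrow> fst p \<notin> F \<and> snd p \<notin> F \<and> fst p \<noteq> snd p \<and>
      (\<exists>X\<in>A. fst p \<in> X \<and> snd p \<in> X) \<and> of_nat n \<le> d (fst p) (snd p)" for F n p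
  define c where "c n = (SOME p. Q (ptsF Q n) n p)" for n
  have cQ: "Q (ptsF Q n) n (c n)" for n
  proof -
    obtain x y where "Q (ptsF Q n) n (x,y)"
      using C ptsF_finite[of Q n] unfolding Cond_def Q_def by fastforce
    then show ?thesis unfolding c_def by (rule someI)
  qed
  define a where "a i = fst (c i)" for i
  define b where "b i = snd (c i)" for i
  have inP: "a i \<in> ptsF Q j \<and> b i \<in> ptsF Q j" if "i < j" for i j
  proof -
    have "a i \<in> ptsF Q (Suc i) \<and> b i \<in> ptsF Q (Suc i)" unfolding a_def b_def c_def by simp
    moreover have "ptsF Q (Suc i) \<subseteq> ptsF Q j" using that by (intro ptsF_mono) simp
    ultimately show ?thesis by blast
  qed
  have notP: "a j \<notin> ptsF Q j \<and> b j \<notin> ptsF Q j" for j using cQ[of j] unfolding Q_def a_def b_def by blast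
  have abne: "a i \<noteq> b i" for i using cQ[of i] unfolding Q_def a_def b_def by blast
  have dab: "of_nat i \<le> d (a i) (b i)" for i using cQ[of i] unfolding Q_def a_def b_def by blast
  have blk: "\<exists>X\<in>A. a i \<in> X \<and> b i \<in> X" for i using cQ[of i] unfolding Q_def a_def b_def by blast
  have dist: "a i \<noteq> a j \<and> a i \<noteq> b j \<and> b i \<noteq> a j \<and> b i \<noteq> b j" if "i < j" for i j
    using inP[OF that] notP[of j] by metis
  have inj_a: "inj a"
  proof (rule injI)
    fix i j assume "a i = a j" then show "i = j" using dist by (metis linorder_neqE_nat)
  qed
  have inj_b: "inj b"
  proof (rule injI)
    fix i j assume "b i = b j" then show "i = j" using dist by (metis linorder_neqE_nat)
  qed
  have ab: "a i \<noteq> b j" for i j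
  proof (cases i j rule: linorder_cases)
    case less then show ?thesis using dist by blast
  next
    case equal then show ?thesis using abne by simp
  next
    case greater then show ?thesis using dist[OF greater] by metis
  qed
  define g where "g z = (if z \<in> range a then b (inv a z) else if z \<in> range b then a (inv b z) else z)" for z
  have ga: "g (a i) = b i" for i unfolding g_def using inj_a by simp
  have gb: "g (b i) = a i" for i
  proof -
    have "b i \<notin> range a" using ab by (metis rangeE)
    then show ?thesis unfolding g_def using inj_b by simp
  qed
  have go: "z \<notin> range a \<Longrightarrow> z \<notin> range b \<Longrightarrow> g z = z" for z unfolding g_def by simp
  have gg: "g (g z) = z" for z
  proof -
    consider (A) i where "z = a i" | (B) i where "z = b i" | (O) "z \<notin> range a" "z \<notin> range b" by blast
    then show ?thesis
    proof cases
      case (A i) then show ?thesis using ga gb by simp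
    next
      case (B i) then show ?thesis using ga gb by simp
    next
      case O then show ?thesis using go by simp
    qed
  qed
  have bij_g: "bij g"
    unfolding bij_def
  proof
    show "inj g" by (rule injI) (metis gg)
    show "surj g" by (metis gg surjI)
  qed
  have sub: "g ` X \<subseteq> X" if X: "X \<in> A" for X
  proof
    fix w assume "w \<in> g ` X"
    then obtain z where z: "z \<in> X" "w = g z" by blast
    have same: "\<And>p q. (\<exists>Y\<in>A. p \<in> Y \<and> q \<in> Y) \<Longrightarrow> p \<in> X \<Longrightarrow> q \<in> X"
    proof -
      fix p q assume "\<exists>Y\<in>A. p \<in> Y \<and> q \<in> Y" "p \<in> X"
      then obtain Y where Y: "Y \<in> A" "p \<in> Y" "q \<in> Y" by blast
      obtain Z where Z: "Z \<in> A" "p \<in> Z" "\<forall>W\<in>A. p \<in> W \<longrightarrow> W = Z" using part_block[OF part] by blast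
      have "Y = X" using Z Y X \<open>p \<in> X\<close> by metis
      then show "q \<in> X" using Y by simp
    qed
    consider (A) i where "z = a i" | (B) i where "z = b i" | (O) "z \<notin> range a" "z \<notin> range b" by blast
    then show "w \<in> X"
    proof cases
      case (A i) then show ?thesis using z ga same[OF blk[of i]] by simp
    next
      case (B i)
      have "\<exists>Y\<in>A. b i \<in> Y \<and> a i \<in> Y" using blk[of i] by blast
      then show ?thesis using z B gb same by simp
    next
      case O then show ?thesis using z go by simp
    qed
  qed
  have "g \<in> stab A"
    unfolding stab_def Sym_def
  proof (intro CollectI conjI ballI bij_g)
    fix X assume X: "X \<in> A"
    show "g ` X = X"
    proof
      show "g ` X \<subseteq> X" using sub[OF X] .
      show "X \<subseteq> g ` X"
      proof
        fix z assume "z \<in> X"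
        then have "g z \<in> X" using sub[OF X] by blast
        then show "z \<in> g ` X" using gg[of z] by (metis image_eqI)
      qed
    qed
  qed
  moreover have "\<not> bounded_perm d g"
  proof
    assume "bounded_perm d g"
    then have "norm_d d g < top" unfolding bounded_perm_def infinity_ennreal_def .
    then obtain n where n: "norm_d d g < of_nat n" using ennreal_Ex_less_of_nat by blast
    have "d (a n) (g (a n)) \<le> norm_d d g" unfolding norm_d_def by (rule SUP_upper) simp
    then have "of_nat n \<le> norm_d d g" using dab[of n] ga[of n] by simp
    then show False using n by simp
  qed
  ultimately show ?thesis by blast
qed

lemma not_sub_small:
  assumes "|S| <o k" "k \<le>o |X|"
  shows "\<not> X \<subseteq> S"
proof
  assume "X \<subseteq> S"
  then have "|X| \<le>o |S|" by (rule card_of_mono1)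
  then have "|X| <o k" using assms(1) by (rule ordLeq_ordLess_trans)
  then show False using assms(2) not_ordLess_ordLeq by blast
qed

lemma far_point:
  assumes gm: "gen_metric d" and y: "y \<notin> ball_d d x (of_nat (Suc n))"
  shows "of_nat n \<le> d x y \<and> x \<noteq> y"
proof -
  have h: "of_nat (Suc n) \<le> d x y" using y unfolding ball_d_def by (simp add: not_less)
  then have "of_nat n \<le> d x y" by (metis le_add2 of_nat_mono order_trans plus_1_eq_Suc)
  moreover have "x \<noteq> y"
  proof
    assume "x = y"
    then have "d x y = 0" using gm unfolding gen_metric_def by blast
    then show False using h by simp
  qed
  ultimately show ?thesis by blast
qed

lemma partA:
  assumes part: "partition_on UNIV A" and card: "Card_order k" and kinf: "infinite (Field k)"
    and X: "X \<in> A" "k \<le>o |X|" and unc: "uncrowded k d" and gm: "gen_metric d"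
  shows "Cond d A"
  unfolding Cond_def
proof (intro allI impI)
  fix F :: "'a set" and n :: nat assume fF: "finite F"
  have Fk: "|F| <o k" using fin_less[OF card kinf fF] .
  obtain x where x: "x \<in> X" "x \<notin> F" using not_sub_small[OF Fk X(2)] by blast
  let ?B = "ball_d d x (of_nat (Suc n))"
  have Bk: "|?B| <o k" using unc unfolding uncrowded_def
    by (metis infinity_ennreal_def of_nat_less_top)
  have "|F \<union> ?B| <o k" by (rule card_of_Un_ordLess_infinite_Field[OF kinf card Fk Bk])
  then obtain y where y: "y \<in> X" "y \<notin> F" "y \<notin> ?B" using not_sub_small[OF _ X(2)] by blast
  show "\<exists>x y. x \<notin> F \<and> y \<notin> F \<and> x \<noteq> y \<and> (\<exists>X\<in>A. x \<in> X \<and> y \<in> X) \<and> of_nat n \<le> d x y"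
    using far_point[OF gm y(3)] x y X(1) by blast
qed

lemma partBneg:
  fixes A :: "'a set set"
  assumes part: "partition_on UNIV A" and card: "Card_order k" and kinf: "infinite (Field k)"
    and reg: "regularCard k" and blk: "\<forall>X\<in>A. |X| <o k"
    and nob: "\<not> (\<exists>L::'a set. |L| <o k \<and> (\<forall>X\<in>A. |X| \<le>o card_of L))"
    and unc: "unif_uncrowded k d" and gm: "gen_metric d"
  shows "Cond d A"
  unfolding Cond_def
proof (intro allI impI)
  fix F :: "'a set" and n :: nat assume fF: "finite F"
  have Fk: "|F| <o k" using fin_less[OF card kinf fF] .
  let ?r = "of_nat (Suc n) :: ennreal"
  obtain L :: "'a set" where L: "|L| <o k" "\<forall>x. |ball_d d x ?r| \<le>o card_of L"
    using unc unfolding unif_uncrowded_def by (metis infinity_ennreal_def of_nat_less_top)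
  let ?U = "\<Union>z\<in>F. \<Union>{X\<in>A. z \<in> X}"
  have ci: "Cinfinite k" using card kinf unfolding cinfinite_def by blast
  have "\<forall>z\<in>F. |\<Union>{X\<in>A. z \<in> X}| <o k"
  proof
    fix z assume "z \<in> F"
    obtain X where X: "X \<in> A" "z \<in> X" "\<forall>Z\<in>A. z \<in> Z \<longrightarrow> Z = X" using part_block[OF part] by blast
    then have "\<Union>{X\<in>A. z \<in> X} = X" by blast
    then show "|\<Union>{X\<in>A. z \<in> X}| <o k" using blk X(1) by simp
  qed
  then have Uk: "|?U| <o k" by (rule card_of_UNION_ordLess_infinite_Field_regularCard[OF reg ci Fk])
  let ?M = "L \<union> ?U"
  have Mk: "|?M| <o k" by (rule card_of_Un_ordLess_infinite_Field[OF kinf card L(1) Uk])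
  then obtain X where X: "X \<in> A" "\<not> |X| \<le>o |?M|" using nob by blast
  have XF: "X \<inter> F = {}"
  proof (rule ccontr)
    assume "X \<inter> F \<noteq> {}"
    then have "X \<subseteq> ?M" using X(1) by blast
    then show False using X(2) card_of_mono1 by blast
  qed
  have "X \<noteq> {}" using partition_onD3[OF part] X(1) by blast
  then obtain x where x: "x \<in> X" by blast
  have "\<not> X \<subseteq> ball_d d x ?r"
  proof
    assume "X \<subseteq> ball_d d x ?r"
    then have "|X| \<le>o |ball_d d x ?r|" by (rule card_of_mono1)
    moreover have "|ball_d d x ?r| \<le>o |?M|"
      using ordLeq_transitive[OF L(2)[rule_format, of x] card_of_mono1[of L ?M]] by blast
    ultimately show False using X(2) ordLeq_transitive by blast
  qed
  then obtain y where y: "y \<in> X" "y \<notin> ball_d d x ?r" by blast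
  show "\<exists>x y. x \<notin> F \<and> y \<notin> F \<and> x \<noteq> y \<and> (\<exists>X\<in>A. x \<in> X \<and> y \<in> X) \<and> of_nat n \<le> d x y"
    using far_point[OF gm y(2)] x y X(1) XF by blast
qed

theorem theorem3p3:
  fixes k :: "'b rel"
  assumes inf: "infinite (UNIV :: 'a set)"
    and card: "Card_order k" and kinf: "infinite (Field k)" and reg: "regularCard k"
    and kle: "(k, card_of (UNIV :: 'a set)) \<in> ordLeq"
  shows
    "(\<forall>A::'a set set. partition_on UNIV A \<longrightarrow> case_a k A \<longrightarrow>
        \<not> (\<exists>d. gen_metric d \<and> uncrowded k d \<and> (\<forall>g\<in>stab A. bounded_perm d g)))
     \<and> (\<forall>A::'a set set. partition_on UNIV A \<longrightarrow> case_b k A \<longrightarrow>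
        (\<exists>d. gen_metric d \<and> uncrowded k d \<and> (\<forall>g\<in>stab A. bounded_perm d g)) \<and>
        \<not> (\<exists>d. gen_metric d \<and> unif_uncrowded k d \<and> (\<forall>g\<in>stab A. bounded_perm d g)))
     \<and> (\<forall>A::'a set set. partition_on UNIV A \<longrightarrow> case_c k A \<longrightarrow>
        (\<exists>d. gen_metric d \<and> unif_uncrowded k d \<and> (\<forall>g\<in>stab A. bounded_perm d g)))
     \<and> (\<forall>A B::'a set set. partition_on UNIV A \<longrightarrow> partition_on UNIV B \<longrightarrow>
        case_no k A \<noteq> case_no k B \<longrightarrow> \<not> approx_k k (stab A) (stab B))
     \<and> (\<forall>A B::'a set set. partition_on UNIV A \<longrightarrow> partition_on UNIV B \<longrightarrow>
        case_no k B < case_no k A \<longrightarrow> \<not> preceq_k k (stab B) (stab A))"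
proof -
  have wo: "Well_order k" using card card_order_on_well_order_on by blast
  have emp: "|{} :: ('a \<Rightarrow> 'a) set| <o k" using fin_less[OF card kinf, of "{} :: ('a \<Rightarrow> 'a) set"] by simp
  have P1: "\<not> (\<exists>d. gen_metric d \<and> uncrowded k d \<and> (\<forall>g\<in>stab A. bounded_perm d g))"
    if part: "partition_on UNIV A" and ca: "case_a k A" for A :: "'a set set"
  proof
    assume "\<exists>d. gen_metric d \<and> uncrowded k d \<and> (\<forall>g\<in>stab A. bounded_perm d g)"
    then obtain d where d: "gen_metric d" "uncrowded k d" "\<forall>g\<in>stab A. bounded_perm d g" by blast
    obtain X where X: "X \<in> A" "k \<le>o |X|" using ca unfolding case_a_def by blast
    have "Cond d A" by (rule partA[OF part card kinf X d(2) d(1)])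
    then show False using unbounded_of_cond[OF part] d(3) by blast
  qed
  have P2n: "\<not> (\<exists>d. gen_metric d \<and> unif_uncrowded k d \<and> (\<forall>g\<in>stab A. bounded_perm d g))"
    if part: "partition_on UNIV A" and cb: "case_b k A" for A :: "'a set set"
  proof
    assume "\<exists>d. gen_metric d \<and> unif_uncrowded k d \<and> (\<forall>g\<in>stab A. bounded_perm d g)"
    then obtain d where d: "gen_metric d" "unif_uncrowded k d" "\<forall>g\<in>stab A. bounded_perm d g" by blast
    have blk: "\<forall>X\<in>A. |X| <o k" and nob: "\<not> (\<exists>L::'a set. |L| <o k \<and> (\<forall>X\<in>A. |X| \<le>o card_of L))"
      using cb unfolding case_b_def by blast+
    have "Cond d A" by (rule partBneg[OF part card kinf reg blk nob d(2) d(1)])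
    then show False using unbounded_of_cond[OF part] d(3) by blast
  qed
  have P2p: "\<exists>d. gen_metric d \<and> uncrowded k d \<and> (\<forall>g\<in>stab A. bounded_perm d g)"
    if part: "partition_on UNIV A" and cb: "case_b k A" for A :: "'a set set"
  proof -
    have blk: "\<forall>X\<in>A. |X| <o k" using cb unfolding case_b_def by blast
    have "uncrowded k (dm A {})" by (rule dm_uncrowded[OF part _ card kinf reg blk emp]) simp
    then show ?thesis using dm_metric[OF part] dm_bounded_stab[OF part] by blast
  qed
  have P3: "\<exists>d. gen_metric d \<and> unif_uncrowded k d \<and> (\<forall>g\<in>stab A. bounded_perm d g)"
    if part: "partition_on UNIV A" and cc: "case_c k A" for A :: "'a set set"
  proof -
    obtain L :: "'a set" where L: "|L| <o k" "\<forall>X\<in>A. |X| \<le>o card_of L" using cc unfolding case_c_def by blast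
    have "unif_uncrowded k (dm A {})" by (rule dm_unif[OF part _ card kinf reg L(2) L(1) emp kle]) simp
    then show ?thesis using dm_metric[OF part] dm_bounded_stab[OF part] by blast
  qed
  have notA: "\<forall>X\<in>A. |X| <o k" if "\<not> case_a k A" for A :: "'a set set"
    using that unfolding case_a_def using not_ordLeq_iff_ordLess[OF card_of_Well_order wo] by blast
  have P5: "\<not> preceq_k k (stab B) (stab A)"
    if pA: "partition_on UNIV A" and pB: "partition_on UNIV B" and lt: "case_no k B < case_no k A"
    for A B :: "'a set set"
  proof
    assume "preceq_k k (stab B) (stab A)"
    then obtain U where U: "U \<subseteq> Sym" "|U| <o k" "stab B \<subseteq> gen_perm (stab A \<union> U)"
      unfolding preceq_k_def by blast
    have nA: "\<not> case_a k A" using lt unfolding case_no_def by (auto split: if_splits)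
    have blkA: "\<forall>X\<in>A. |X| <o k" using notA[OF nA] .
    have bnd: "\<forall>g\<in>stab B. bounded_perm (dm A U) g" using dm_bounded_all[OF pA U(1)] U(3) by blast
    have gm: "gen_metric (dm A U)" by (rule dm_metric[OF pA])
    show False
    proof (cases "case_a k B")
      case True
      have "uncrowded k (dm A U)" by (rule dm_uncrowded[OF pA U(1) card kinf reg blkA U(2)])
      then show False using P1[OF pB True] gm bnd by blast
    next
      case False
      then have cbB: "case_b k B" and nbA: "\<not> case_b k A" using lt unfolding case_no_def
        by (auto split: if_splits)
      have "case_c k A" using nbA blkA unfolding case_b_def case_c_def by blast
      then obtain L :: "'a set" where L: "|L| <o k" "\<forall>X\<in>A. |X| \<le>o card_of L" unfolding case_c_def by blast
      have "unif_uncrowded k (dm A U)" by (rule dm_unif[OF pA U(1) card kinf reg L(2) L(1) U(2) kle])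
      then show False using P2n[OF pB cbB] gm bnd by blast
    qed
  qed
  have P4: "\<not> approx_k k (stab A) (stab B)"
    if pA: "partition_on UNIV A" and pB: "partition_on UNIV B" and ne: "case_no k A \<noteq> case_no k B"
    for A B :: "'a set set"
  proof (cases "case_no k B < case_no k A")
    case True then show ?thesis using P5[OF pA pB] unfolding approx_k_def by blast
  next
    case False
    then have "case_no k A < case_no k B" using ne by simp
    then show ?thesis using P5[OF pB pA] unfolding approx_k_def by blast
  qed
  show ?thesis using P1 P2n P2p P3 P4 P5 by blast
qed

end
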